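(* Let $A=(A_1,A_2)\in\mathbb{N}_0^2$, $u_0\in\mathbb{R}\setminus\{0\}$, $l$ an even natural number, and let $p,\bar p$ be real polynomials in $(x,y)$ with $p(x,y)=(y^{A_1}-u_0x^{A_2})^l\,\bar p(x,y)$ and $\bar p(0,0)=0$. Then $(0,0)$ is a point of local minimum of $p$ if and only if it is a point of local minimum of $\bar p$.
   Context: $\mathbb{N}=\{1,2,\dots\}$; $\mathbb{N}_0^2$ is the set of $(A_1,A_2)\in\mathbb{N}^2$ with $\gcd(A_1,A_2)=1$. A point of local minimum of $f$ at $(0,0)$ means $f(x,y)\ge f(0,0)$ for all $(x,y)$ in some neighborhood of $(0,0)$. *)

theory Defs
  imports "HOL-Analysis.Analysis"
begin

definition real_poly2 :: "(real \<Rightarrow> real \<Rightarrow> real) \<Rightarrow> bool" where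
  "real_poly2 f \<longleftrightarrow>
     (\<exists>(N::nat) (c::nat \<Rightarrow> nat \<Rightarrow> real). \<forall>x y. f x y = (\<Sum>i<N. \<Sum>j<N. c i j * x ^ i * y ^ j))"

definition local_min_origin :: "(real \<Rightarrow> real \<Rightarrow> real) \<Rightarrow> bool" where
  "local_min_origin f \<longleftrightarrow>
     (\<exists>U::(real \<times> real) set. open U \<and> (0,0) \<in> U \<and> (\<forall>x y. (x,y) \<in> U \<longrightarrow> f x y \<ge> f 0 0))"

end

theory Submission
  imports Defs
begin

lemma poly2_tendsto:
  assumes "real_poly2 f"
  shows "((\<lambda>t. f x (y + s * t)) \<longlongrightarrow> f x y) (at_right 0)"
proof -
  obtain N c where fc: "\<And>x y. f x y = (\<Sum>i<N. \<Sum>j<N. c i j * x ^ i * y ^ j)"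
    using assms unfolding real_poly2_def by blast
  have "continuous_on UNIV (\<lambda>t. (\<Sum>i<N. \<Sum>j<N. c i j * x ^ i * (y + s * t) ^ j))"
    by (intro continuous_intros)
  hence "isCont (\<lambda>t. (\<Sum>i<N. \<Sum>j<N. c i j * x ^ i * (y + s * t) ^ j)) 0"
    by (simp add: continuous_on_eq_continuous_at)
  hence "((\<lambda>t. f x (y + s * t)) \<longlongrightarrow> f x (y + s * 0)) (at 0)"
    unfolding fc isCont_def by simp
  thus ?thesis using tendsto_mono at_le by (simp add: filterlim_at_split)
qed

lemma pos_mult_nonneg: "0 < (a::real) \<Longrightarrow> 0 \<le> a * b \<Longrightarrow> 0 \<le> b"
  by (simp add: zero_le_mult_iff)

theorem mainTheorem14:
  fixes A1 A2 :: nat and u0 :: real and l :: nat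
    and p pbar :: "real \<Rightarrow> real \<Rightarrow> real"
  assumes "A1 \<ge> 1" and "A2 \<ge> 1" and "coprime A1 A2"
    and "u0 \<noteq> 0"
    and "l \<ge> 1" and "even l"
    and "real_poly2 p" and "real_poly2 pbar"
    and "\<And>x y. p x y = (y ^ A1 - u0 * x ^ A2) ^ l * pbar x y"
    and "pbar 0 0 = 0"
  shows "local_min_origin p \<longleftrightarrow> local_min_origin pbar"
proof
  have p0: "p 0 0 = 0" using assms(9,10) by simp
  have ev: "\<And>z::real. z ^ l \<ge> 0" using assms(6) by (simp add: zero_le_even_power)
  {
    assume "local_min_origin pbar"
    then obtain U where U: "open U" "(0,0) \<in> U" "\<And>x y. (x,y) \<in> U \<Longrightarrow> pbar x y \<ge> 0"
      unfolding local_min_origin_def using assms(10) by auto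
    show "local_min_origin p" unfolding local_min_origin_def p0
      using U assms(9) ev by (metis zero_le_mult_iff)
  }
  assume "local_min_origin p"
  then obtain U where U: "open U" "(0,0) \<in> U" "\<And>x y. (x,y) \<in> U \<Longrightarrow> p x y \<ge> 0"
    unfolding local_min_origin_def using p0 by auto
  have pos: "pbar x y \<ge> 0" if xy: "(x,y) \<in> U" for x y
  proof (cases "y ^ A1 - u0 * x ^ A2 = 0")
    case False
    hence "(y ^ A1 - u0 * x ^ A2) ^ l > 0" using assms(6)
      by (simp add: zero_less_power_eq)
    moreover have "p x y \<ge> 0" using U(3) xy .
    ultimately show ?thesis using assms(9)[of x y] by (simp add: zero_le_mult_iff)
  next
    case True
    define s :: real where "s = (if y \<ge> 0 then 1 else -1)"
    obtain e where e: "e > 0" "\<And>z. dist z (x,y) < e \<Longrightarrow> z \<in> U"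
      using U(1) xy open_dist by metis
    have "eventually (\<lambda>t. pbar x (y + s * t) \<ge> 0) (at_right 0)"
      unfolding eventually_at_right_field
    proof (intro exI[of _ e] conjI allI impI)
      show "0 < e" by fact
      fix t :: real assume t0: "0 < t" and te: "t < e"
      note t = conjI[OF t0 te]
      have absy: "\<bar>y + s * t\<bar> = \<bar>y\<bar> + t" using t by (auto simp: s_def)
      have "(x, y + s*t) \<in> U" apply (rule e(2))
        using t by (auto simp: dist_Pair_Pair dist_real_def s_def)
      hence pp: "p x (y + s*t) \<ge> 0" using U(3) by blast
      have "\<bar>y\<bar> ^ A1 < \<bar>y + s * t\<bar> ^ A1" unfolding absy
        using t assms(1) by (intro power_strict_mono) auto
      hence "(y + s*t) ^ A1 \<noteq> y ^ A1" by (metis power_abs less_irrefl)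
      hence "(y + s*t) ^ A1 - u0 * x ^ A2 \<noteq> 0" using True by simp
      hence "((y + s*t) ^ A1 - u0 * x ^ A2) ^ l > 0" using assms(6)
        by (simp add: zero_less_power_eq)
      moreover have "0 \<le> ((y + s*t) ^ A1 - u0 * x ^ A2) ^ l * pbar x (y + s*t)"
        using pp assms(9)[of x "y+s*t"] by argo
      ultimately show "pbar x (y + s*t) \<ge> 0"
        by (rule pos_mult_nonneg)
    qed
    show ?thesis
      by (rule tendsto_lowerbound[OF poly2_tendsto[OF assms(8), of x y s] \<open>eventually _ _\<close>]) simp
  qed
  show "local_min_origin pbar" unfolding local_min_origin_def assms(10)
    using U pos by blast
qed

end
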